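(* Let $d\ge2$, let $\Omega\subset\mathbb R^d$ be a nonempty bounded open convex polytope, and let $E\subset\mathbb R^d$ carry a Borel probability measure $\mu$ such that $(E,\mu)$ is weakly incoming to $\Omega$. Let $x_0\in\overline\Omega$. Then there exist $r_0>0$, $\epsilon>0$, a measurable $F\subset E$ with $\mu(F)>0$ and $\theta\in\{\pm1\}$ such that for all $f\in F$, all $x\in B(x_0,r_0)\cap\Omega$ and all $t\in[0,\epsilon]$, $x+t\theta f\in\Omega$.
   Context: $\Omega=\{x\in\mathbb R^d:\ \ell_j(x)>b_j,\ j=1,\dots,m\}$ for linear forms $\ell_j$ and reals $b_j$. Define $\mathrm c(x)=0$ for $x\in\Omega$, $+\infty$ for $x\notin\overline\Omega$, $\#\{i:\ell_i(x)=b_i\}$ for $x\in\partial\Omega$. $(E,\mu)$ is weakly incoming to $\Omega$ if for every $x_0\in\partial\Omega$ there exist $\epsilon>0$, $\theta\in\{\pm1\}$ and a measurable $F\subset E$ with $\mu(F)>0$ such that $\mathrm c(x_0+\theta te)<\mathrm c(x_0)$ for all $t\in]0,\epsilon]$, $e\in F$. $B(x_0,r)$ is the open ball. *)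

theory Defs
  imports "HOL-Probability.Probability"
begin

text \<open>The polytope given by m strict linear inequalities  a j \<bullet> x > b j  (j < m);
  the linear form l_j is represented by its gradient vector a j.\<close>
definition polyset :: "nat \<Rightarrow> (nat \<Rightarrow> 'a::euclidean_space) \<Rightarrow> (nat \<Rightarrow> real) \<Rightarrow> 'a set" where
  "polyset m a b = {x. \<forall>j<m. a j \<bullet> x > b j}"

definition cfun :: "nat \<Rightarrow> (nat \<Rightarrow> 'a::euclidean_space) \<Rightarrow> (nat \<Rightarrow> real) \<Rightarrow> 'a \<Rightarrow> enat" where
  "cfun m a b x =
     (if x \<in> polyset m a b then 0
      else if x \<notin> closure (polyset m a b) then \<infinity>
      else enat (card {i. i < m \<and> a i \<bullet> x = b i}))"

definition weakly_incoming ::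
  "nat \<Rightarrow> (nat \<Rightarrow> 'a::euclidean_space) \<Rightarrow> (nat \<Rightarrow> real) \<Rightarrow> 'a set \<Rightarrow> 'a measure \<Rightarrow> bool" where
  "weakly_incoming m a b E \<mu> \<longleftrightarrow>
     (\<forall>x0 \<in> frontier (polyset m a b). \<exists>\<epsilon>>0. \<exists>\<theta>\<in>{-1, 1::real}. \<exists>F \<in> sets \<mu>.
        F \<subseteq> E \<and> measure \<mu> F > 0 \<and>
        (\<forall>t\<in>{0<..\<epsilon>}. \<forall>e\<in>F. cfun m a b (x0 + (\<theta> * t) *\<^sub>R e) < cfun m a b x0))"

end

theory Submission
  imports Defs
begin

lemma polyset_open: "open (polyset m a b)"
proof -
  have "polyset m a b = (\<Inter>j\<in>{..<m}. {x. a j \<bullet> x > b j})"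
    unfolding polyset_def by auto
  thus ?thesis by (auto intro!: open_INT open_halfspace_gt)
qed

lemma polyset_closure: "closure (polyset m a b) \<subseteq> {x. \<forall>j<m. a j \<bullet> x \<ge> b j}"
proof (rule closure_minimal)
  show "polyset m a b \<subseteq> {x. \<forall>j<m. a j \<bullet> x \<ge> b j}"
    unfolding polyset_def by (auto simp: less_imp_le)
  have "{x. \<forall>j<m. a j \<bullet> x \<ge> b j} = (\<Inter>j\<in>{..<m}. {x. a j \<bullet> x \<ge> b j})" by auto
  thus "closed {x. \<forall>j<m. a j \<bullet> x \<ge> b j}" by (auto intro!: closed_INT closed_halfspace_ge)
qed

lemma one_constraint:
  fixes a x0 :: "'a::euclidean_space" and \<theta> R \<delta> :: real
  assumes "\<bar>\<theta>\<bar> = 1" "R \<ge> 0" "\<delta> > 0"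
  shows "\<exists>c>0. \<forall>s. 0 < s \<longrightarrow> s < c \<longrightarrow> (\<forall>x\<in>ball x0 s. \<forall>t\<in>{0..s}. \<forall>e. norm e \<le> R \<longrightarrow>
            a \<bullet> x0 - \<delta> < a \<bullet> (x + (t*\<theta>) *\<^sub>R e))"
proof -
  define K where "K = norm a * (1 + R) + 1"
  have K: "K > 0" using assms unfolding K_def by (simp add: add_nonneg_pos)
  show ?thesis
  proof (intro exI[of _ "\<delta>/K"] conjI allI impI ballI)
    show "\<delta>/K > 0" using K assms by simp
    fix s x t and e :: 'a
    assume s: "0 < s" "s < \<delta>/K" and x: "x \<in> ball x0 s" and t: "t \<in> {0..s}" and e: "norm e \<le> R"
    have sK: "s * K < \<delta>" using s K by (simp add: pos_less_divide_eq)
    have 1: "\<bar>a \<bullet> (x - x0)\<bar> \<le> norm a * s"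
    proof -
      have "\<bar>a \<bullet> (x - x0)\<bar> \<le> norm a * norm (x - x0)" by (rule Cauchy_Schwarz_ineq2)
      also have "\<dots> \<le> norm a * s" using x by (intro mult_left_mono) (auto simp: dist_norm norm_minus_commute less_imp_le)
      finally show ?thesis .
    qed
    have 2: "\<bar>(t*\<theta>) * (a \<bullet> e)\<bar> \<le> s * (norm a * R)"
    proof -
      have "\<bar>(t*\<theta>) * (a \<bullet> e)\<bar> = t * \<bar>a \<bullet> e\<bar>" using t assms by (simp add: abs_mult)
      also have "\<dots> \<le> s * (norm a * R)"
      proof (rule mult_mono)
        show "t \<le> s" using t by simp
        have "\<bar>a \<bullet> e\<bar> \<le> norm a * norm e" by (rule Cauchy_Schwarz_ineq2)
        also have "\<dots> \<le> norm a * R" using e by (intro mult_left_mono) auto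
        finally show "\<bar>a \<bullet> e\<bar> \<le> norm a * R" .
      qed (use s in auto)
      finally show ?thesis .
    qed
    have eq: "a \<bullet> (x + (t*\<theta>) *\<^sub>R e) = a \<bullet> x0 + a \<bullet> (x - x0) + (t*\<theta>) * (a \<bullet> e)"
      by (simp add: inner_add_right inner_diff_right)
    have "norm a * s + s * (norm a * R) < \<delta>"
    proof -
      have "norm a * s + s * (norm a * R) \<le> s * K" unfolding K_def using s by (simp add: algebra_simps)
      thus ?thesis using sK by linarith
    qed
    thus "a \<bullet> x0 - \<delta> < a \<bullet> (x + (t*\<theta>) *\<^sub>R e)" using 1 2 eq by linarith
  qed
qed

lemma bounded_part:
  fixes F E :: "'a::euclidean_space set"
  assumes "F \<in> sets \<mu>" "F \<subseteq> E" "measure \<mu> F > 0" "prob_space \<mu>"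
    and "sets \<mu> = sets (restrict_space borel E)"
  shows "\<exists>R\<ge>0. F \<inter> cball 0 R \<in> sets \<mu> \<and> measure \<mu> (F \<inter> cball 0 R) > 0"
proof -
  interpret prob_space \<mu> by fact
  have meas: "F \<inter> cball 0 R \<in> sets \<mu>" for R :: real
  proof -
    have "E \<inter> cball 0 R \<in> sets \<mu>" unfolding assms(5) sets_restrict_space by auto
    hence "F \<inter> (E \<inter> cball 0 R) \<in> sets \<mu>" using assms(1) by auto
    moreover have "F \<inter> (E \<inter> cball 0 R) = F \<inter> cball 0 R" using assms(2) by auto
    ultimately show ?thesis by simp
  qed
  show ?thesis
  proof (rule ccontr)
    assume neg: "\<not> ?thesis"
    have z: "measure \<mu> (F \<inter> cball 0 (real n)) = 0" for n
    proof -
      have "\<not> (0 < measure \<mu> (F \<inter> cball 0 (real n)))"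
        using neg meas[of "real n"] of_nat_0_le_iff by blast
      thus ?thesis using measure_nonneg[of \<mu> "F \<inter> cball 0 (real n)"] by linarith
    qed
    have "F \<inter> cball 0 (real n) \<in> null_sets \<mu>" for n
      using z[of n] meas[of "real n"] by (simp add: emeasure_eq_measure null_sets_def)
    hence "(\<Union>n. F \<inter> cball 0 (real n)) \<in> null_sets \<mu>" by blast
    moreover have "(\<Union>n. F \<inter> cball 0 (real n)) = F"
    proof safe
      fix x assume "x \<in> F"
      obtain n where "norm x \<le> real n" using real_arch_simple by blast
      thus "x \<in> (\<Union>n. F \<inter> cball 0 (real n))" using \<open>x \<in> F\<close> by auto
    qed
    ultimately have "measure \<mu> F = 0" by (simp add: emeasure_eq_measure null_sets_def)
    thus False using assms(3) by simp
  qed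
qed

lemma main_lemma:
  fixes a :: "nat \<Rightarrow> 'a::euclidean_space"
  assumes F: "F \<in> sets \<mu>" "F \<subseteq> E" "measure \<mu> F > 0" and P: "prob_space \<mu>"
    and S: "sets \<mu> = sets (restrict_space borel E)"
    and th: "\<theta> \<in> {-1, 1::real}"
    and x0: "x0 \<in> closure (polyset m a b)"
    and act: "\<forall>e\<in>F. \<forall>i<m. a i \<bullet> x0 = b i \<longrightarrow> \<theta> * (a i \<bullet> e) \<ge> 0"
  shows "\<exists>r0>0. \<exists>\<epsilon>>0. \<exists>F \<in> sets \<mu>. F \<subseteq> E \<and> measure \<mu> F > 0 \<and>
           (\<exists>\<theta>\<in>{-1, 1::real}. \<forall>f\<in>F. \<forall>x \<in> ball x0 r0 \<inter> polyset m a b.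
              \<forall>t\<in>{0..\<epsilon>}. x + (t * \<theta>) *\<^sub>R f \<in> polyset m a b)"
proof -
  obtain R where R: "R \<ge> 0" "F \<inter> cball 0 R \<in> sets \<mu>" "measure \<mu> (F \<inter> cball 0 R) > 0"
    using bounded_part[OF F P S] by blast
  have abs: "\<bar>\<theta>\<bar> = 1" using th by auto
  have ge: "\<forall>j<m. a j \<bullet> x0 \<ge> b j" using x0 polyset_closure by blast
  let ?I = "{i. i < m \<and> a i \<bullet> x0 \<noteq> b i}"
  have "\<forall>i\<in>?I. eventually (\<lambda>s. 0 < s \<longrightarrow> (\<forall>x\<in>ball x0 s. \<forall>t\<in>{0..s}. \<forall>e. norm e \<le> R \<longrightarrow>
            b i < a i \<bullet> (x + (t*\<theta>) *\<^sub>R e))) (at_right (0::real))"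
  proof
    fix i assume i: "i \<in> ?I"
    hence d: "a i \<bullet> x0 - b i > 0" using ge by force
    from one_constraint[OF abs R(1) d, of x0 "a i"] obtain c where
      c: "c > 0" "\<forall>s. 0 < s \<longrightarrow> s < c \<longrightarrow> (\<forall>x\<in>ball x0 s. \<forall>t\<in>{0..s}. \<forall>e. norm e \<le> R \<longrightarrow>
            a i \<bullet> x0 - (a i \<bullet> x0 - b i) < a i \<bullet> (x + (t*\<theta>) *\<^sub>R e))" by blast
    show "eventually (\<lambda>s. 0 < s \<longrightarrow> (\<forall>x\<in>ball x0 s. \<forall>t\<in>{0..s}. \<forall>e. norm e \<le> R \<longrightarrow>
            b i < a i \<bullet> (x + (t*\<theta>) *\<^sub>R e))) (at_right (0::real))"
      unfolding eventually_at_right_field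
    proof (intro exI[of _ c] conjI allI impI)
      show "0 < c" by (rule c(1))
      fix s :: real assume "0 < s" "s < c"
      thus "\<forall>x\<in>ball x0 s. \<forall>t\<in>{0..s}. \<forall>e. norm e \<le> R \<longrightarrow> b i < a i \<bullet> (x + (t*\<theta>) *\<^sub>R e)"
        using c(2) by simp
    qed
  qed
  hence "eventually (\<lambda>s. \<forall>i\<in>?I. 0 < s \<longrightarrow> (\<forall>x\<in>ball x0 s. \<forall>t\<in>{0..s}. \<forall>e. norm e \<le> R \<longrightarrow>
            b i < a i \<bullet> (x + (t*\<theta>) *\<^sub>R e))) (at_right (0::real))"
    by (intro eventually_ball_finite) simp_all
  then obtain c where c: "c > 0" "\<forall>y>0. y < c \<longrightarrow> (\<forall>i\<in>?I. 0 < y \<longrightarrow> (\<forall>x\<in>ball x0 y. \<forall>t\<in>{0..y}. \<forall>e. norm e \<le> R \<longrightarrow>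
            b i < a i \<bullet> (x + (t*\<theta>) *\<^sub>R e)))"
    unfolding eventually_at_right_field by (elim exE conjE) (rule that)
  define s where "s = c / 2"
  have s: "s > 0" "s < c" using c by (auto simp: s_def)
  show ?thesis
  proof (intro exI[of _ s] conjI s(1) bexI[of _ "F \<inter> cball 0 R"] R(3) bexI[of _ \<theta>] th ballI R(2))
    show "F \<inter> cball 0 R \<subseteq> E" using F by auto
    fix f x t assume f: "f \<in> F \<inter> cball 0 R" and x: "x \<in> ball x0 s \<inter> polyset m a b" and t: "t \<in> {0..s}"
    show "x + (t * \<theta>) *\<^sub>R f \<in> polyset m a b"
      unfolding polyset_def
    proof (intro CollectI allI impI)
      fix j assume j: "j < m"
      show "b j < a j \<bullet> (x + (t * \<theta>) *\<^sub>R f)"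
      proof (cases "a j \<bullet> x0 = b j")
        case True
        hence "\<theta> * (a j \<bullet> f) \<ge> 0" using act f j by auto
        hence "(t*\<theta>) * (a j \<bullet> f) \<ge> 0" using t by (simp add: mult.assoc)
        moreover have "b j < a j \<bullet> x" using x j unfolding polyset_def by auto
        ultimately show ?thesis by (simp add: inner_add_right)
      next
        case False
        hence "j \<in> ?I" using j by auto
        moreover have "norm f \<le> R" using f by auto
        have Q: "\<forall>i\<in>?I. 0 < s \<longrightarrow> (\<forall>x\<in>ball x0 s. \<forall>t\<in>{0..s}. \<forall>e. norm e \<le> R \<longrightarrow>
            b i < a i \<bullet> (x + (t*\<theta>) *\<^sub>R e))"
          using c(2) s(1) s(2) by simp
        have "\<forall>x\<in>ball x0 s. \<forall>t\<in>{0..s}. \<forall>e. norm e \<le> R \<longrightarrow> b j < a j \<bullet> (x + (t*\<theta>) *\<^sub>R e)"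
          using Q \<open>j \<in> ?I\<close> s(1) by blast
        thus ?thesis using x t \<open>norm f \<le> R\<close> by blast
      qed
    qed
  qed
qed

theorem corollary5p5:
  fixes a :: "nat \<Rightarrow> 'a::euclidean_space" and b :: "nat \<Rightarrow> real" and m :: nat
    and E :: "'a set" and \<mu> :: "'a measure" and x0 :: 'a
  assumes "DIM('a) \<ge> 2"
    and "polyset m a b \<noteq> {}"
    and "bounded (polyset m a b)"
    and "prob_space \<mu>"
    and "sets \<mu> = sets (restrict_space borel E)"
    and "weakly_incoming m a b E \<mu>"
    and "x0 \<in> closure (polyset m a b)"
  shows "\<exists>r0>0. \<exists>\<epsilon>>0. \<exists>F \<in> sets \<mu>. F \<subseteq> E \<and> measure \<mu> F > 0 \<and>
           (\<exists>\<theta>\<in>{-1, 1::real}. \<forall>f\<in>F. \<forall>x \<in> ball x0 r0 \<inter> polyset m a b.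
              \<forall>t\<in>{0..\<epsilon>}. x + (t * \<theta>) *\<^sub>R f \<in> polyset m a b)"
proof (cases "x0 \<in> polyset m a b")
  case True
  have "frontier (polyset m a b) \<noteq> {}"
    using assms(2,3) frontier_eq_empty[of "polyset m a b"] by auto
  then obtain y where "y \<in> frontier (polyset m a b)" by blast
  moreover have "\<forall>x0 \<in> frontier (polyset m a b). \<exists>\<epsilon>>0. \<exists>\<theta>\<in>{-1, 1::real}. \<exists>F \<in> sets \<mu>.
        F \<subseteq> E \<and> measure \<mu> F > 0 \<and>
        (\<forall>t\<in>{0<..\<epsilon>}. \<forall>e\<in>F. cfun m a b (x0 + (\<theta> * t) *\<^sub>R e) < cfun m a b x0)"
    using assms(6) by (simp only: weakly_incoming_def)
  ultimately have "\<exists>\<epsilon>>0. \<exists>\<theta>\<in>{-1, 1::real}. \<exists>F \<in> sets \<mu>.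
        F \<subseteq> E \<and> measure \<mu> F > 0 \<and>
        (\<forall>t\<in>{0<..\<epsilon>}. \<forall>e\<in>F. cfun m a b (y + (\<theta> * t) *\<^sub>R e) < cfun m a b y)"
    by (rule bspec[rotated])
  then obtain \<epsilon> \<theta> F where w: "\<theta> \<in> {-1, 1::real}" "F \<in> sets \<mu>" "F \<subseteq> E" "measure \<mu> F > 0"
    by (elim exE bexE conjE) (rule that)
  have "\<forall>e\<in>F. \<forall>i<m. a i \<bullet> x0 = b i \<longrightarrow> \<theta> * (a i \<bullet> e) \<ge> 0"
    using True unfolding polyset_def by auto
  thus ?thesis by (intro main_lemma[OF w(2,3,4) assms(4,5) w(1) assms(7)])
next
  case False
  have "x0 \<in> frontier (polyset m a b)"
    using False assms(7) polyset_open[of m a b] by (simp add: frontier_def interior_open)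
  moreover have "\<forall>x0 \<in> frontier (polyset m a b). \<exists>\<epsilon>>0. \<exists>\<theta>\<in>{-1, 1::real}. \<exists>F \<in> sets \<mu>.
        F \<subseteq> E \<and> measure \<mu> F > 0 \<and>
        (\<forall>t\<in>{0<..\<epsilon>}. \<forall>e\<in>F. cfun m a b (x0 + (\<theta> * t) *\<^sub>R e) < cfun m a b x0)"
    using assms(6) by (simp only: weakly_incoming_def)
  ultimately have "\<exists>\<epsilon>>0. \<exists>\<theta>\<in>{-1, 1::real}. \<exists>F \<in> sets \<mu>.
        F \<subseteq> E \<and> measure \<mu> F > 0 \<and>
        (\<forall>t\<in>{0<..\<epsilon>}. \<forall>e\<in>F. cfun m a b (x0 + (\<theta> * t) *\<^sub>R e) < cfun m a b x0)"
    by (rule bspec[rotated])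
  then obtain \<epsilon> \<theta> F where e: "\<epsilon> > 0" "\<theta> \<in> {-1, 1::real}" "F \<in> sets \<mu>" "F \<subseteq> E" "measure \<mu> F > 0"
    and dec: "\<forall>t\<in>{0<..\<epsilon>}. \<forall>e\<in>F. cfun m a b (x0 + (\<theta> * t) *\<^sub>R e) < cfun m a b x0"
    by (elim exE bexE conjE) (rule that)
  have "\<forall>e\<in>F. \<forall>i<m. a i \<bullet> x0 = b i \<longrightarrow> \<theta> * (a i \<bullet> e) \<ge> 0"
  proof (intro ballI allI impI)
    fix e i assume eF: "e \<in> F" and i: "i < m" "a i \<bullet> x0 = b i"
    have "\<epsilon> \<in> {0<..\<epsilon>}" using e(1) by simp
    hence lt: "cfun m a b (x0 + (\<theta> * \<epsilon>) *\<^sub>R e) < cfun m a b x0" using dec eF by blast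
    have "x0 + (\<theta> * \<epsilon>) *\<^sub>R e \<in> closure (polyset m a b)"
    proof (rule ccontr)
      assume n: "x0 + (\<theta> * \<epsilon>) *\<^sub>R e \<notin> closure (polyset m a b)"
      hence "x0 + (\<theta> * \<epsilon>) *\<^sub>R e \<notin> polyset m a b" using closure_subset by blast
      hence "cfun m a b (x0 + (\<theta> * \<epsilon>) *\<^sub>R e) = \<infinity>" using n unfolding cfun_def by simp
      thus False using lt by simp
    qed
    hence "a i \<bullet> (x0 + (\<theta> * \<epsilon>) *\<^sub>R e) \<ge> b i" using polyset_closure[of m a b] i(1) by blast
    hence "\<epsilon> * (\<theta> * (a i \<bullet> e)) \<ge> 0" using i by (simp add: inner_add_right algebra_simps)
    thus "\<theta> * (a i \<bullet> e) \<ge> 0" using e(1) by (simp add: zero_le_mult_iff)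
  qed
  thus ?thesis by (intro main_lemma[OF e(3,4,5) assms(4,5) e(2) assms(7)])
qed

end
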